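(* Let $\chi\in C(\mathbb{T}^d)$ be a viscosity subsolution of $\bar c+H(x,D\chi(x))=0$ on $\mathbb{T}^d$, and let $(\gamma,u)$ be a trajectory-control pair on $\mathbb{R}$ such that $\gamma$ is calibrated for $\chi$. Then for every $\tau>0$, $$\bar c+L^*(\gamma(\tau),p)=0\qquad\text{for all }p\in D^+_F\chi(\gamma(\tau)).$$
   Context: Setting: $1\le m\le d$, $\mathbb{T}^d=\mathbb{R}^d/\mathbb{Z}^d$; $f_1,\dots,f_m$ smooth vector fields satisfying the Hörmander condition; $F(x)=[f_1(x)|\cdots|f_m(x)]$, (F): $F\in C^{1,1}$, rank $F(x)=m$. Trajectory-control pairs: $\gamma$ locally absolutely continuous, $u\in L^2_{loc}$, $\dot\gamma=F(\gamma)u$ a.e. (L): $L\in C^2(\mathbb{T}^d\times\mathbb{R}^m)$, $D^2_uL\ge0$, $L(x,u)\ge K_1|u|^\sigma-K_2$ ($\sigma>1$). $L^*(x,q)=\sup_{u\in\mathbb{R}^m}\{\langle q,u\rangle-L(x,u)\}$ for $q\in\mathbb{R}^m$, and $H(x,p)=L^*(x,F^*(x)p)$. (S): no singular minimizing controls other than zero for $V^T(x)=\inf\{\int_0^TL(\gamma,u):\gamma(0)=x\}$; $\bar c=\lim_{T\to\infty}V^T(x)/T$ is the critical constant. A pair $(\gamma,u)$ on an interval $I$ is calibrated for $\chi$ if $\chi(\gamma(b))-\chi(\gamma(a))=\int_a^bL(\gamma,u)\,ds-\bar c(b-a)$ for all $a<b$ in $I$. $D^+\chi(x)$ denotes the (Fréchet)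 superdifferential of $\chi$ at $x$, and $D^+_F\chi(x)=F^*(x)D^+\chi(x)\subset\mathbb{R}^m$. Assumptions (F), (L), (S) are in force. *)

theory Defs
  imports "HOL-Analysis.Analysis"
begin

section \<open>Torus: functions on R^d that are Z^d-periodic\<close>

definition int_vec :: "real^'d \<Rightarrow> bool" where
  "int_vec z \<longleftrightarrow> (\<forall>i. z $ i \<in> \<int>)"

definition torus_periodic :: "(real^'d \<Rightarrow> 'b) \<Rightarrow> bool" where
  "torus_periodic g \<longleftrightarrow> (\<forall>x z. int_vec z \<longrightarrow> g (x + z) = g x)"

coinductive smooth_real :: "('a::real_normed_vector \<Rightarrow> real) \<Rightarrow> bool" where
  "(\<forall>x. g differentiable (at x)) \<Longrightarrow>
   (\<forall>v. smooth_real (\<lambda>x. frechet_derivative g (at x) v)) \<Longrightarrow> smooth_real g"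

definition smooth_vf :: "(real^'d \<Rightarrow> real^'d) \<Rightarrow> bool" where
  "smooth_vf X \<longleftrightarrow> (\<forall>i. smooth_real (\<lambda>x. X x $ i))"

definition lie_bracket :: "(real^'d \<Rightarrow> real^'d) \<Rightarrow> (real^'d \<Rightarrow> real^'d) \<Rightarrow> real^'d \<Rightarrow> real^'d" where
  "lie_bracket X Y x = frechet_derivative Y (at x) (X x) - frechet_derivative X (at x) (Y x)"

inductive_set lie_gen :: "('m \<Rightarrow> real^'d \<Rightarrow> real^'d) \<Rightarrow> (real^'d \<Rightarrow> real^'d) set"
  for f where
  base: "f j \<in> lie_gen f"
| brk: "X \<in> lie_gen f \<Longrightarrow> Y \<in> lie_gen f \<Longrightarrow> lie_bracket X Y \<in> lie_gen f"

definition hoermander :: "('m \<Rightarrow> real^'d \<Rightarrow> real^'d) \<Rightarrow> bool" where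
  "hoermander f \<longleftrightarrow> (\<forall>x. span {X x | X. X \<in> lie_gen f} = UNIV)"

definition Fmat :: "('m \<Rightarrow> real^'d \<Rightarrow> real^'d) \<Rightarrow> real^'d \<Rightarrow> real^'m^'d" where
  "Fmat f x = (\<chi> i j. f j x $ i)"

definition assm_F :: "('m::finite \<Rightarrow> real^'d::finite \<Rightarrow> real^'d) \<Rightarrow> bool" where
  "assm_F f \<longleftrightarrow>
     (\<exists>DF :: (real^'d) \<Rightarrow> ((real^'d) \<Rightarrow>\<^sub>L (real^'m^'d)).
        (\<forall>x. (Fmat f has_derivative blinfun_apply (DF x)) (at x)) \<and>
        (\<exists>K. \<forall>x y. norm (DF x - DF y) \<le> K * norm (x - y))) \<and>
     (\<forall>x. rank (Fmat f x) = CARD('m))"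

definition assm_L :: "(real^'d::finite \<Rightarrow> real^'m::finite \<Rightarrow> real) \<Rightarrow> bool" where
  "assm_L L \<longleftrightarrow>
     (\<forall>u. torus_periodic (\<lambda>x. L x u)) \<and>
     (\<exists>(D1 :: ((real^'d) \<times> (real^'m)) \<Rightarrow> (((real^'d) \<times> (real^'m)) \<Rightarrow>\<^sub>L real))
        (D2 :: ((real^'d) \<times> (real^'m)) \<Rightarrow> (((real^'d) \<times> (real^'m)) \<Rightarrow>\<^sub>L (((real^'d) \<times> (real^'m)) \<Rightarrow>\<^sub>L real))).
        (\<forall>z. ((\<lambda>(x, u). L x u) has_derivative blinfun_apply (D1 z)) (at z)) \<and>
        (\<forall>z. (D1 has_derivative blinfun_apply (D2 z)) (at z)) \<and>
        continuous_on UNIV D2 \<and>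
        (\<forall>x u v. blinfun_apply (blinfun_apply (D2 (x, u)) (0, v)) (0, v) \<ge> 0)) \<and>
     (\<exists>K1 K2 \<sigma>. K1 > 0 \<and> \<sigma> > 1 \<and> (\<forall>x u. L x u \<ge> K1 * norm u powr \<sigma> - K2))"

definition Lstar :: "(real^'d \<Rightarrow> real^'m \<Rightarrow> real) \<Rightarrow> real^'d \<Rightarrow> real^'m \<Rightarrow> real" where
  "Lstar L x q = (SUP u. q \<bullet> u - L x u)"

definition Ham :: "('m \<Rightarrow> real^'d \<Rightarrow> real^'d) \<Rightarrow> (real^'d \<Rightarrow> real^'m \<Rightarrow> real)
                   \<Rightarrow> real^'d \<Rightarrow> real^'d \<Rightarrow> real" where
  "Ham f L x p = Lstar L x (transpose (Fmat f x) *v p)"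

definition abs_cont_on :: "(real \<Rightarrow> 'a::real_normed_vector) \<Rightarrow> real \<Rightarrow> real \<Rightarrow> bool" where
  "abs_cont_on g a b \<longleftrightarrow>
     (\<forall>\<epsilon>>0. \<exists>\<delta>>0. \<forall>n (s::nat \<Rightarrow> real) t.
        (\<forall>k<n. a \<le> s k \<and> s k \<le> t k \<and> t k \<le> b) \<and>
        (\<forall>k<n. \<forall>l<n. k \<noteq> l \<longrightarrow> t k \<le> s l \<or> t l \<le> s k) \<and>
        (\<Sum>k<n. t k - s k) < \<delta> \<longrightarrow>
        (\<Sum>k<n. norm (g (t k) - g (s k))) < \<epsilon>)"

definition loc_abs_cont :: "(real \<Rightarrow> 'a::real_normed_vector) \<Rightarrow> real set \<Rightarrow> bool" where
  "loc_abs_cont g I \<longleftrightarrow> (\<forall>a b. {a..b} \<subseteq> I \<longrightarrow> abs_cont_on g a b)"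

definition L2_loc :: "(real \<Rightarrow> 'a::euclidean_space) \<Rightarrow> real set \<Rightarrow> bool" where
  "L2_loc u I \<longleftrightarrow> u \<in> borel_measurable (lebesgue_on I) \<and>
     (\<forall>a b. {a..b} \<subseteq> I \<longrightarrow> integrable (lebesgue_on {a..b}) (\<lambda>t. norm (u t) ^ 2))"

definition tc_pair :: "('m::finite \<Rightarrow> real^'d::finite \<Rightarrow> real^'d) \<Rightarrow> real set
                       \<Rightarrow> (real \<Rightarrow> real^'d) \<Rightarrow> (real \<Rightarrow> real^'m) \<Rightarrow> bool" where
  "tc_pair f I \<gamma> u \<longleftrightarrow> loc_abs_cont \<gamma> I \<and> L2_loc u I \<and>
     (AE t in lebesgue. t \<in> I \<longrightarrow> (\<gamma> has_vector_derivative (Fmat f (\<gamma> t) *v u t)) (at t))"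

text \<open>Action integral; L is bounded below, so a non-integrable action is +infinity.\<close>
definition action :: "(real^'d \<Rightarrow> real^'m \<Rightarrow> real) \<Rightarrow> (real \<Rightarrow> real^'d) \<Rightarrow> (real \<Rightarrow> real^'m)
                      \<Rightarrow> real \<Rightarrow> real \<Rightarrow> ereal" where
  "action L \<gamma> u a b =
     (if integrable (lebesgue_on {a..b}) (\<lambda>s. L (\<gamma> s) (u s))
      then ereal (integral\<^sup>L (lebesgue_on {a..b}) (\<lambda>s. L (\<gamma> s) (u s))) else \<infinity>)"

definition value_fun :: "('m::finite \<Rightarrow> real^'d::finite \<Rightarrow> real^'d) \<Rightarrow> (real^'d \<Rightarrow> real^'m \<Rightarrow> real)
                         \<Rightarrow> real \<Rightarrow> real^'d \<Rightarrow> ereal" where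
  "value_fun f L T x = (INF (\<gamma>, u) \<in> {(\<gamma>, u). tc_pair f {0..T} \<gamma> u \<and> \<gamma> 0 = x}. action L \<gamma> u 0 T)"

text \<open>Critical constant: lim_{T->oo} V^T(x)/T (independent of x; we take x = 0).\<close>
definition crit_const :: "('m::finite \<Rightarrow> real^'d::finite \<Rightarrow> real^'d) \<Rightarrow> (real^'d \<Rightarrow> real^'m \<Rightarrow> real) \<Rightarrow> real" where
  "crit_const f L = Lim at_top (\<lambda>T. real_of_ereal (value_fun f L T 0) / T)"

text \<open>The differential of the end-point map u |-> gamma_u(T) (initial point fixed) at u,
  applied to v, is xi(T) where xi solves the linearised system
  xi' = D_x(F(gamma)u) xi + F(gamma) v, xi(0) = 0.  u is singular iff this is not onto.\<close>
definition singular_control :: "('m::finite \<Rightarrow> real^'d::finite \<Rightarrow> real^'d) \<Rightarrow> real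
                                \<Rightarrow> (real \<Rightarrow> real^'d) \<Rightarrow> (real \<Rightarrow> real^'m) \<Rightarrow> bool" where
  "singular_control f T \<gamma> u \<longleftrightarrow>
     {\<xi> T | \<xi> v. L2_loc v {0..T} \<and> abs_cont_on \<xi> 0 T \<and> \<xi> 0 = 0 \<and>
        (AE t in lebesgue. t \<in> {0..T} \<longrightarrow>
          (\<xi> has_vector_derivative
             (frechet_derivative (\<lambda>y. Fmat f y *v u t) (at (\<gamma> t)) (\<xi> t) + Fmat f (\<gamma> t) *v v t)) (at t))}
     \<noteq> UNIV"

definition assm_S :: "('m::finite \<Rightarrow> real^'d::finite \<Rightarrow> real^'d) \<Rightarrow> (real^'d \<Rightarrow> real^'m \<Rightarrow> real) \<Rightarrow> bool" where
  "assm_S f L \<longleftrightarrow> (\<forall>T>0. \<forall>x \<gamma> u.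
     tc_pair f {0..T} \<gamma> u \<and> \<gamma> 0 = x \<and> action L \<gamma> u 0 T = value_fun f L T x \<and>
     singular_control f T \<gamma> u \<longrightarrow> negligible {t \<in> {0..T}. u t \<noteq> 0})"

definition calibrated :: "('m::finite \<Rightarrow> real^'d::finite \<Rightarrow> real^'d) \<Rightarrow> (real^'d \<Rightarrow> real^'m \<Rightarrow> real)
                         \<Rightarrow> (real^'d \<Rightarrow> real) \<Rightarrow> real set \<Rightarrow> (real \<Rightarrow> real^'d) \<Rightarrow> (real \<Rightarrow> real^'m) \<Rightarrow> bool" where
  "calibrated f L chi I \<gamma> u \<longleftrightarrow> (\<forall>a\<in>I. \<forall>b\<in>I. a < b \<longrightarrow>
     action L \<gamma> u a b = ereal (chi (\<gamma> b) - chi (\<gamma> a) + crit_const f L * (b - a)))"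

definition C1_fun :: "(real^'d::finite \<Rightarrow> real) \<Rightarrow> bool" where
  "C1_fun \<phi> \<longleftrightarrow> (\<exists>D :: (real^'d) \<Rightarrow> ((real^'d) \<Rightarrow>\<^sub>L real).
     (\<forall>y. (\<phi> has_derivative blinfun_apply (D y)) (at y)) \<and> continuous_on UNIV D)"

definition visc_subsol :: "real \<Rightarrow> (real^'d::finite \<Rightarrow> real^'d \<Rightarrow> real) \<Rightarrow> (real^'d \<Rightarrow> real) \<Rightarrow> bool" where
  "visc_subsol c H chi \<longleftrightarrow> continuous_on UNIV chi \<and>
     (\<forall>\<phi> x p. C1_fun \<phi> \<and> (\<phi> has_derivative (\<lambda>h. p \<bullet> h)) (at x) \<and>
        (\<exists>r>0. \<forall>y. dist y x < r \<longrightarrow> chi y - \<phi> y \<le> chi x - \<phi> x) \<longrightarrow>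
        c + H x p \<le> 0)"

definition superdiff :: "(real^'d::finite \<Rightarrow> real) \<Rightarrow> real^'d \<Rightarrow> (real^'d) set" where
  "superdiff chi x = {p. \<forall>\<epsilon>>0. \<exists>\<delta>>0. \<forall>y. norm (y - x) < \<delta> \<longrightarrow>
       chi y - chi x - p \<bullet> (y - x) \<le> \<epsilon> * norm (y - x)}"

definition superdiff_F :: "('m::finite \<Rightarrow> real^'d::finite \<Rightarrow> real^'d) \<Rightarrow> (real^'d \<Rightarrow> real) \<Rightarrow> real^'d \<Rightarrow> (real^'m) set" where
  "superdiff_F f chi x = (\<lambda>p. transpose (Fmat f x) *v p) ` superdiff chi x"

end

theory Submission
  imports Defs
begin


lemma ac_finite_set:
  fixes g :: "real \<Rightarrow> 'a::real_normed_vector"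
  assumes ac: "abs_cont_on g a b" and e: "e > 0"
  obtains \<delta> where "\<delta> > 0"
    "\<And>D. finite D \<Longrightarrow> (\<And>s t. (s,t) \<in> D \<Longrightarrow> a \<le> s \<and> s \<le> t \<and> t \<le> b) \<Longrightarrow>
       (\<And>s t s' t'. (s,t) \<in> D \<Longrightarrow> (s',t') \<in> D \<Longrightarrow> (s,t) \<noteq> (s',t') \<Longrightarrow> t \<le> s' \<or> t' \<le> s) \<Longrightarrow>
       (\<Sum>(s,t)\<in>D. t - s) < \<delta> \<Longrightarrow> (\<Sum>(s,t)\<in>D. norm (g t - g s)) < e"
proof -
  obtain \<delta> where d: "\<delta> > 0" and H: "\<And>n (s::nat \<Rightarrow> real) t.
        (\<forall>k<n. a \<le> s k \<and> s k \<le> t k \<and> t k \<le> b) \<and>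
        (\<forall>k<n. \<forall>l<n. k \<noteq> l \<longrightarrow> t k \<le> s l \<or> t l \<le> s k) \<and>
        (\<Sum>k<n. t k - s k) < \<delta> \<longrightarrow>
        (\<Sum>k<n. norm (g (t k) - g (s k))) < e"
    using ac[unfolded abs_cont_on_def, rule_format, OF e] by blast
  show ?thesis
  proof (rule that[OF d])
    fix D :: "(real \<times> real) set"
    assume fin: "finite D" and D1: "\<And>s t. (s,t) \<in> D \<Longrightarrow> a \<le> s \<and> s \<le> t \<and> t \<le> b"
      and D2: "\<And>s t s' t'. (s,t) \<in> D \<Longrightarrow> (s',t') \<in> D \<Longrightarrow> (s,t) \<noteq> (s',t') \<Longrightarrow> t \<le> s' \<or> t' \<le> s"
      and D3: "(\<Sum>(s,t)\<in>D. t - s) < \<delta>"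
    obtain h where h: "bij_betw h {0..<card D} D" using ex_bij_betw_nat_finite[OF fin] by blast
    have lt: "{..<card D} = {0..<card D}" by auto
    have hin: "k < card D \<Longrightarrow> h k \<in> D" for k using h by (auto simp: bij_betw_def)
    have hinj: "k < card D \<Longrightarrow> l < card D \<Longrightarrow> k \<noteq> l \<Longrightarrow> h k \<noteq> h l" for k l
      using h by (auto simp: bij_betw_def inj_on_def)
    have s1: "(\<Sum>k<card D. snd (h k) - fst (h k)) = (\<Sum>(s,t)\<in>D. t - s)"
      unfolding lt using sum.reindex_bij_betw[OF h, of "\<lambda>(s,t). t - s"] by (simp add: case_prod_beta)
    have s2: "(\<Sum>k<card D. norm (g (snd (h k)) - g (fst (h k)))) = (\<Sum>(s,t)\<in>D. norm (g t - g s))"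
      unfolding lt using sum.reindex_bij_betw[OF h, of "\<lambda>(s,t). norm (g t - g s)"] by (simp add: case_prod_beta)
    have "(\<Sum>k<card D. norm (g (snd (h k)) - g (fst (h k)))) < e"
    proof (rule H[rule_format], intro conjI allI impI)
      fix k assume "k < card D"
      then show "a \<le> fst (h k)" "fst (h k) \<le> snd (h k)" "snd (h k) \<le> b"
        using D1[of "fst (h k)" "snd (h k)"] hin by auto
    next
      fix k l assume "k < card D" "l < card D" "k \<noteq> l"
      then show "snd (h k) \<le> fst (h l) \<or> snd (h l) \<le> fst (h k)"
        using D2[of "fst (h k)" "snd (h k)" "fst (h l)" "snd (h l)"] hin hinj by auto
    next
      show "(\<Sum>k<card D. snd (h k) - fst (h k)) < \<delta>" using s1 D3 by simp
    qed
    then show "(\<Sum>(s,t)\<in>D. norm (g t - g s)) < e" using s2 by simp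
  qed
qed

lemma ac_continuous:
  fixes g :: "real \<Rightarrow> 'a::real_normed_vector"
  assumes "loc_abs_cont g UNIV"
  shows "continuous_on UNIV g"
proof -
  have "isCont g x" for x
  proof -
    have ac: "abs_cont_on g (x-1) (x+1)" using assms by (auto simp: loc_abs_cont_def)
    show ?thesis unfolding continuous_at_eps_delta
    proof (intro allI impI)
      fix e :: real assume "e > 0"
      then obtain \<delta> where d: "\<delta> > 0" and H: "\<And>n (s::nat \<Rightarrow> real) t.
        (\<forall>k<n. x-1 \<le> s k \<and> s k \<le> t k \<and> t k \<le> x+1) \<and>
        (\<forall>k<n. \<forall>l<n. k \<noteq> l \<longrightarrow> t k \<le> s l \<or> t l \<le> s k) \<and>
        (\<Sum>k<n. t k - s k) < \<delta> \<longrightarrow>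
        (\<Sum>k<n. norm (g (t k) - g (s k))) < e"
        using ac[unfolded abs_cont_on_def, rule_format, OF \<open>e>0\<close>] by blast
      show "\<exists>d>0. \<forall>y. dist y x < d \<longrightarrow> dist (g y) (g x) < e"
      proof (intro exI[of _ "min 1 \<delta>"] conjI allI impI)
        show "0 < min 1 \<delta>" using d by simp
        fix y assume y: "dist y x < min 1 \<delta>"
        show "dist (g y) (g x) < e"
        proof (cases "x \<le> y")
          case True
          have "(\<Sum>k<(1::nat). norm (g y - g x)) < e"
            using H[of 1 "\<lambda>_. x" "\<lambda>_. y"] y True by (auto simp: dist_real_def)
          then show ?thesis by (simp add: dist_norm)
        next
          case False
          have "(\<Sum>k<(1::nat). norm (g x - g y)) < e"
            using H[of 1 "\<lambda>_. y" "\<lambda>_. x"] y False by (auto simp: dist_real_def)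
          then show ?thesis by (simp add: dist_norm norm_minus_commute)
        qed
      qed
    qed
  qed
  then show ?thesis by (simp add: continuous_on_eq_continuous_at)
qed



abbreviation "cont \<equiv> Henstock_Kurzweil_Integration.content"

lemma ftc_ac:
  fixes \<psi> g :: "real \<Rightarrow> 'a::banach"
  assumes ab: "a \<le> b" and ac: "abs_cont_on \<psi> a b" and E: "negligible E"
    and der: "\<And>t. t \<in> {a..b} - E \<Longrightarrow> (\<psi> has_vector_derivative g t) (at t)"
  shows "(g has_integral (\<psi> b - \<psi> a)) {a..b}"
proof -
  define g0 where "g0 t = (if t \<in> E then 0 else g t)" for t
  have "(g0 has_integral (\<psi> b - \<psi> a)) {a..b}"
    unfolding has_integral_real
  proof (intro allI impI)
    fix e :: real assume e: "e > 0"
    have e2: "e/2 > 0" using e by simp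
    obtain \<delta> where \<delta>: "\<delta> > 0" and acD: "\<And>D. finite D \<Longrightarrow> (\<And>s t. (s,t) \<in> D \<Longrightarrow> a \<le> s \<and> s \<le> t \<and> t \<le> b) \<Longrightarrow>
       (\<And>s t s' t'. (s,t) \<in> D \<Longrightarrow> (s',t') \<in> D \<Longrightarrow> (s,t) \<noteq> (s',t') \<Longrightarrow> t \<le> s' \<or> t' \<le> s) \<Longrightarrow>
       (\<Sum>(s,t)\<in>D. t - s) < \<delta> \<Longrightarrow> (\<Sum>(s,t)\<in>D. norm (\<psi> t - \<psi> s)) < e/2"
      using ac_finite_set[OF ac e2] by blast
    have Enull: "E \<in> null_sets lebesgue" using E negligible_iff_null_sets by blast
    then have Emeas: "E \<in> sets lebesgue" by auto
    obtain T where T: "open T" "E \<subseteq> T" "(T - E) \<in> lmeasurable" "emeasure lebesgue (T - E) < ennreal \<delta>"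
      using sets_lebesgue_outer_open[OF Emeas \<delta>] by blast
    have Tm: "T \<in> lmeasurable" by (meson Enull T(2) T(3) fmeasurableI_null_sets fmeasurable_Diff_D)
    have "measure lebesgue (T - E) < \<delta>"
      using T(3,4) \<delta> by (simp add: emeasure_eq_measure2 ennreal_less_iff)
    moreover have "measure lebesgue (T - E) = measure lebesgue T"
      using Tm Enull by (intro measure_Diff_null_set) auto
    ultimately have T\<delta>: "measure lebesgue T < \<delta>" by simp
    define e' where "e' = e / (2 * (b - a + 1))"
    have e': "e' > 0" using e ab by (simp add: e'_def)
    have "\<forall>t. \<exists>d>0. (t \<in> E \<longrightarrow> ball t d \<subseteq> T) \<and> (t \<in> {a..b} - E \<longrightarrow>
            (\<forall>y. norm (y - t) < d \<longrightarrow> norm (\<psi> y - \<psi> t - (y - t) *\<^sub>R g t) \<le> e' * norm (y - t)))"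
    proof
      fix t
      show "\<exists>d>0. (t \<in> E \<longrightarrow> ball t d \<subseteq> T) \<and> (t \<in> {a..b} - E \<longrightarrow>
            (\<forall>y. norm (y - t) < d \<longrightarrow> norm (\<psi> y - \<psi> t - (y - t) *\<^sub>R g t) \<le> e' * norm (y - t)))"
      proof (cases "t \<in> E")
        case True
        then obtain d where "d > 0" "ball t d \<subseteq> T" using T(1,2) open_contains_ball by blast
        then show ?thesis using True by blast
      next
        case False
        show ?thesis
        proof (cases "t \<in> {a..b}")
          case True
          then have "(\<psi> has_derivative (\<lambda>h. h *\<^sub>R g t)) (at t)"
            using der False by (simp add: has_vector_derivative_def)
          then obtain d where "d > 0" "\<forall>y. norm (y - t) < d \<longrightarrow> norm (\<psi> y - \<psi> t - (y - t) *\<^sub>R g t) \<le> e' * norm (y - t)"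
            using e' unfolding has_derivative_at_alt by blast
          then show ?thesis using False by blast
        next
          case False
          then show ?thesis using \<open>t \<notin> E\<close> by (intro exI[of _ 1]) auto
        qed
      qed
    qed
    then obtain d where d: "\<forall>t. d t > 0 \<and> (t \<in> E \<longrightarrow> ball t (d t) \<subseteq> T) \<and> (t \<in> {a..b} - E \<longrightarrow>
            (\<forall>y. norm (y - t) < d t \<longrightarrow> norm (\<psi> y - \<psi> t - (y - t) *\<^sub>R g t) \<le> e' * norm (y - t)))"
      unfolding choice_iff by blast
    show "\<exists>\<gamma>. gauge \<gamma> \<and> (\<forall>\<D>. \<D> tagged_division_of {a..b} \<and> \<gamma> fine \<D> \<longrightarrow>
            norm ((\<Sum>(x, k)\<in>\<D>. cont k *\<^sub>R g0 x) - (\<psi> b - \<psi> a)) < e)"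
    proof (intro exI conjI allI impI)
      show "gauge (\<lambda>t. ball t (d t))" using d by (intro gauge_ball_dependent) auto
      fix p assume "p tagged_division_of {a..b} \<and> (\<lambda>t. ball t (d t)) fine p"
      then have p: "p tagged_division_of {a..b}" and fine: "(\<lambda>t. ball t (d t)) fine p" by auto
      have fin: "finite p" using p by (rule tagged_division_ofD(1))
      have Kform: "\<exists>u v. K = {u..v} \<and> u \<le> x \<and> x \<le> v \<and> a \<le> u \<and> v \<le> b \<and> K \<subseteq> ball x (d x)"
        if xKp: "(x,K) \<in> p" for x K
      proof -
        obtain u v where K: "K = cbox u v" using tagged_division_ofD(4)[OF p xKp] by blast
        have "x \<in> K" using tagged_division_ofD(2)[OF p xKp] .
        moreover have "K \<subseteq> {a..b}" using tagged_division_ofD(3)[OF p xKp] .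
        moreover have "K \<subseteq> ball x (d x)" using fineD[OF fine xKp] .
        ultimately show ?thesis using K by (intro exI[of _ u] exI[of _ v]) auto
      qed
      define pE where "pE = {xK \<in> p. fst xK \<in> E}"
      define pG where "pG = p - pE"
      have finE: "finite pE" and finG: "finite pG" using fin by (auto simp: pE_def pG_def)
      have pU: "p = pE \<union> pG" "pE \<inter> pG = {}" by (auto simp: pE_def pG_def)
      define F where "F = (\<lambda>(x::real, K::real set). cont K *\<^sub>R g0 x - (\<psi> (Sup K) - \<psi> (Inf K)))"
      have sumeq: "(\<Sum>(x, k)\<in>p. cont k *\<^sub>R g0 x) - (\<psi> b - \<psi> a) = sum F pE + sum F pG"
      proof -
        have "(\<Sum>(x, k)\<in>p. cont k *\<^sub>R g0 x) - (\<psi> b - \<psi> a)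
              = (\<Sum>(x, k)\<in>p. cont k *\<^sub>R g0 x) - (\<Sum>(x, K)\<in>p. \<psi> (Sup K) - \<psi> (Inf K))"
          using additive_tagged_division_1[OF ab p, of \<psi>] by simp
        also have "\<dots> = sum F p" unfolding F_def by (simp add: sum_subtractf case_prod_beta)
        also have "\<dots> = sum F pE + sum F pG" using pU finE finG by (simp add: sum.union_disjoint)
        finally show ?thesis .
      qed
      have contsum: "(\<Sum>(x, K)\<in>p. cont K) = b - a"
        using additive_content_tagged_division[of p a b] p ab by (simp add: cbox_interval)
      have Gbound: "norm (sum F pG) \<le> e' * (b - a)"
      proof -
        have "norm (sum F pG) \<le> (\<Sum>xK\<in>pG. norm (F xK))" by (rule norm_sum)
        also have "\<dots> \<le> (\<Sum>(x,K)\<in>pG. e' * cont K)"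
        proof (rule sum_mono, clarify)
          fix x K assume xK: "(x,K) \<in> pG"
          then have xKp: "(x,K) \<in> p" and xE: "x \<notin> E" by (auto simp: pG_def pE_def)
          obtain u v where uv: "K = {u..v}" "u \<le> x" "x \<le> v" "a \<le> u" "v \<le> b" "K \<subseteq> ball x (d x)"
            using Kform[OF xKp] by blast
          have xab: "x \<in> {a..b} - E" using uv xE by auto
          have dd: "\<And>y. norm (y - x) < d x \<Longrightarrow> norm (\<psi> y - \<psi> x - (y - x) *\<^sub>R g x) \<le> e' * norm (y - x)"
            using d xab by blast
          have "u \<in> K" "v \<in> K" using uv by auto
          then have "u \<in> ball x (d x)" "v \<in> ball x (d x)" using uv(6) by blast+
          then have uin: "norm (u - x) < d x" and vin: "norm (v - x) < d x"
            by (auto simp: dist_norm norm_minus_commute)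
          have "F (x,K) = (\<psi> u - \<psi> x - (u - x) *\<^sub>R g x) - (\<psi> v - \<psi> x - (v - x) *\<^sub>R g x)"
          proof -
            have "F (x,K) = (v - u) *\<^sub>R g x - (\<psi> v - \<psi> u)"
              using uv xE by (simp add: F_def g0_def)
            also have "\<dots> = (\<psi> u - \<psi> x - (u - x) *\<^sub>R g x) - (\<psi> v - \<psi> x - (v - x) *\<^sub>R g x)"
              by (simp add: algebra_simps)
            finally show ?thesis .
          qed
          then have "norm (F (x,K)) \<le> norm (\<psi> u - \<psi> x - (u - x) *\<^sub>R g x) + norm (\<psi> v - \<psi> x - (v - x) *\<^sub>R g x)"
            by (simp only: norm_triangle_ineq4)
          then have "norm (F (x,K)) \<le> e' * norm (u - x) + e' * norm (v - x)"
            using dd[OF uin] dd[OF vin] by linarith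
          also have "\<dots> = e' * cont K" using uv by (simp add: algebra_simps)
          finally show "norm (F (x,K)) \<le> e' * cont K" .
        qed
        also have "\<dots> = e' * (\<Sum>(x,K)\<in>pG. cont K)" by (simp add: sum_distrib_left case_prod_beta)
        also have "\<dots> \<le> e' * (\<Sum>(x,K)\<in>p. cont K)"
          using e' fin by (intro mult_left_mono sum_mono2) (auto simp: pG_def)
        finally show ?thesis using contsum by simp
      qed
      have Ebound: "norm (sum F pE) < e/2"
      proof -
        define pE' where "pE' = {xK \<in> pE. cont (snd xK) \<noteq> 0}"
        have finE': "finite pE'" using finE by (simp add: pE'_def)
        have FE: "F xK = - (\<psi> (Sup (snd xK)) - \<psi> (Inf (snd xK)))" if "xK \<in> pE" for xK
          using that by (auto simp: F_def g0_def pE_def case_prod_beta)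
        have iform: "\<exists>u v. snd xK = {u..v} \<and> u < v \<and> a \<le> u \<and> v \<le> b \<and> snd xK \<subseteq> T" if "xK \<in> pE'" for xK
        proof -
          obtain x K where xK: "xK = (x,K)" by force
          have xKp: "(x,K) \<in> p" and xE: "x \<in> E" and c0: "cont K \<noteq> 0"
            using that by (auto simp: pE'_def pE_def xK)
          obtain u v where uv: "K = {u..v}" "u \<le> x" "x \<le> v" "a \<le> u" "v \<le> b" "K \<subseteq> ball x (d x)"
            using Kform[OF xKp] by blast
          have "u < v" using uv c0 by auto
          moreover have "K \<subseteq> T" using uv(6) d xE by blast
          ultimately show ?thesis using uv xK by auto
        qed
        have disj: "interior (snd xK) \<inter> interior (snd yL) = {}" if "xK \<in> pE'" "yL \<in> pE'" "xK \<noteq> yL" for xK yL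
          using tagged_division_ofD(5)[OF p, of "fst xK" "snd xK" "fst yL" "snd yL"] that
          by (auto simp: pE'_def pE_def)
        have order: "Sup (snd xK) \<le> Inf (snd yL) \<or> Sup (snd yL) \<le> Inf (snd xK)" if hh: "xK \<in> pE'" "yL \<in> pE'" "xK \<noteq> yL" for xK yL
        proof -
          obtain u v where uv: "snd xK = {u..v}" "u < v" using iform[OF hh(1)] by blast
          obtain u' v' where uv': "snd yL = {u'..v'}" "u' < v'" using iform[OF hh(2)] by blast
          have "{u<..<v} \<inter> {u'<..<v'} = {}" using disj[OF hh] uv uv' by simp
          then have "v \<le> u' \<or> v' \<le> u"
          proof (rule contrapos_pp)
            assume "\<not> (v \<le> u' \<or> v' \<le> u)"
            then have "(max u u' + min v v')/2 \<in> {u<..<v} \<inter> {u'<..<v'}"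
              using uv(2) uv'(2) by (auto simp: max_def min_def)
            then show "{u<..<v} \<inter> {u'<..<v'} \<noteq> {}" by blast
          qed
          then show ?thesis using uv uv' by auto
        qed
        have inj: "inj_on (\<lambda>xK. (Inf (snd xK), Sup (snd xK))) pE'"
        proof (rule inj_onI)
          fix xK yL assume a1: "xK \<in> pE'" "yL \<in> pE'" and eq: "(Inf (snd xK), Sup (snd xK)) = (Inf (snd yL), Sup (snd yL))"
          show "xK = yL"
          proof (rule ccontr)
            assume "xK \<noteq> yL"
            from order[OF a1 this] eq iform[OF a1(1)] show False by auto
          qed
        qed
        define D where "D = (\<lambda>xK. (Inf (snd xK), Sup (snd xK))) ` pE'"
        have sumE: "(\<Sum>xK\<in>pE. norm (F xK)) = (\<Sum>(s,t)\<in>D. norm (\<psi> t - \<psi> s))"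
        proof -
          have "(\<Sum>xK\<in>pE. norm (F xK)) = (\<Sum>xK\<in>pE'. norm (F xK))"
          proof (rule sum.mono_neutral_right[OF finE])
            show "pE' \<subseteq> pE" by (auto simp: pE'_def)
            show "\<forall>i\<in>pE - pE'. norm (F i) = 0"
            proof
              fix xK assume xK: "xK \<in> pE - pE'"
              then have xKp: "(fst xK, snd xK) \<in> p" and c0: "cont (snd xK) = 0" by (auto simp: pE_def pE'_def)
              obtain u v where uv: "snd xK = {u..v}" "u \<le> v" using Kform[OF xKp] by force
              then have "u = v" using c0 by simp
              then show "norm (F xK) = 0" using FE xK uv by auto
            qed
          qed
          also have "\<dots> = (\<Sum>xK\<in>pE'. norm (\<psi> (Sup (snd xK)) - \<psi> (Inf (snd xK))))"
            using FE by (auto simp: pE'_def norm_minus_commute intro!: sum.cong)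
          also have "\<dots> = (\<Sum>(s,t)\<in>D. norm (\<psi> t - \<psi> s))"
            unfolding D_def by (subst sum.reindex[OF inj]) auto
          finally show ?thesis .
        qed
        have "(\<Sum>(s,t)\<in>D. norm (\<psi> t - \<psi> s)) < e/2"
        proof (rule acD)
          show "finite D" using finE' by (simp add: D_def)
          show "a \<le> s \<and> s \<le> t \<and> t \<le> b" if "(s,t) \<in> D" for s t
            using that iform by (force simp: D_def)
          show "t \<le> s' \<or> t' \<le> s" if "(s,t) \<in> D" "(s',t') \<in> D" "(s,t) \<noteq> (s',t')" for s t s' t'
            using that order by (force simp: D_def)
          have "(\<Sum>(s,t)\<in>D. t - s) = (\<Sum>xK\<in>pE'. Sup (snd xK) - Inf (snd xK))"
            unfolding D_def by (subst sum.reindex[OF inj]) auto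
          also have "\<dots> = (\<Sum>xK\<in>pE'. measure lebesgue (snd xK))"
            using iform by (intro sum.cong) force+
          also have "\<dots> = measure lebesgue (\<Union>(snd ` pE'))"
          proof (rule measure_negligible_finite_Union_image[symmetric, OF finE'])
            show "snd xK \<in> lmeasurable" if "xK \<in> pE'" for xK using iform[OF that] by auto
            show "pairwise (\<lambda>xK yL. negligible (snd xK \<inter> snd yL)) pE'"
              unfolding pairwise_def
            proof (intro ballI impI)
              fix xK yL assume a1: "xK \<in> pE'" "yL \<in> pE'" "xK \<noteq> yL"
              obtain u v where uv: "snd xK = {u..v}" "u < v" using iform[OF a1(1)] by blast
              obtain u' v' where uv': "snd yL = {u'..v'}" "u' < v'" using iform[OF a1(2)] by blast
              have "snd xK \<inter> snd yL \<subseteq> {v, v'}" using order[OF a1] uv uv' by auto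
              then show "negligible (snd xK \<inter> snd yL)"
                by (meson finite.emptyI finite_insert negligible_finite negligible_subset)
            qed
          qed
          also have "\<dots> \<le> measure lebesgue T"
            using iform Tm by (intro measure_mono_fmeasurable) (fastforce intro!: sets.finite_Union finE')+
          finally show "(\<Sum>(s,t)\<in>D. t - s) < \<delta>" using T\<delta> by simp
        qed
        moreover have "norm (sum F pE) \<le> (\<Sum>xK\<in>pE. norm (F xK))" by (rule norm_sum)
        ultimately show ?thesis using sumE by simp
      qed
      have "e' * (b - a) \<le> e / 2"
        using e ab by (simp add: e'_def field_simps)
      then show "norm ((\<Sum>(x, k)\<in>p. cont k *\<^sub>R g0 x) - (\<psi> b - \<psi> a)) < e"
        unfolding sumeq using Gbound Ebound norm_triangle_ineq[of "sum F pE" "sum F pG"] by linarith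
    qed
  qed
  then show ?thesis
    by (rule has_integral_spike[OF E, rotated]) (auto simp: g0_def)
qed



lemma coercive_aux:
  fixes K1 \<sigma> c :: real
  assumes K1: "K1 > 0" and s: "\<sigma> > 1" and c: "c \<ge> 0"
  obtains R where "R \<ge> 1" "\<And>r. r \<ge> R \<Longrightarrow> c * r \<le> K1 * r powr \<sigma>"
proof -
  define R where "R = max 1 ((c / K1) powr (1 / (\<sigma> - 1)))"
  show ?thesis
  proof (rule that)
    show "R \<ge> 1" by (simp add: R_def)
    fix r assume r: "r \<ge> R"
    then have r1: "r \<ge> 1" by (simp add: R_def)
    have eq: "r powr \<sigma> = r * r powr (\<sigma> - 1)"
      using r1 by (simp add: powr_diff powr_one)
    have "c / K1 \<le> r powr (\<sigma> - 1)"
    proof (cases "c = 0")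
      case True then show ?thesis by simp
    next
      case False
      have "c / K1 = ((c / K1) powr (1 / (\<sigma> - 1))) powr (\<sigma> - 1)"
        using False c K1 s by (simp add: powr_powr)
      also have "\<dots> \<le> r powr (\<sigma> - 1)"
        using r s by (intro powr_mono2) (auto simp: R_def)
      finally show ?thesis .
    qed
    then have "c \<le> K1 * r powr (\<sigma> - 1)" using K1 by (simp add: field_simps)
    then have "c * r \<le> K1 * r powr (\<sigma> - 1) * r" using r1 by (intro mult_right_mono) auto
    then show "c * r \<le> K1 * r powr \<sigma>" by (simp add: eq algebra_simps)
  qed
qed

lemma assm_L_coercive:
  assumes "assm_L L"
  shows "\<exists>K1 K2 \<sigma>. K1 > 0 \<and> \<sigma> > 1 \<and> (\<forall>x u. L x u \<ge> K1 * norm u powr \<sigma> - K2)"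
  using assms unfolding assm_L_def by (elim conjE)

lemma assm_L_cont:
  fixes L :: "real^'a::finite \<Rightarrow> real^'b::finite \<Rightarrow> real"
  assumes "assm_L L"
  shows "continuous_on UNIV (\<lambda>z. L (fst z) (snd z))"
proof -
  obtain D1 :: "_ \<Rightarrow> ((real^'a) \<times> (real^'b)) \<Rightarrow>\<^sub>L real" and D2 where
    "(\<forall>z. ((\<lambda>(x, u). L x u) has_derivative blinfun_apply (D1 z)) (at z)) \<and>
        (\<forall>z. (D1 has_derivative blinfun_apply (D2 z)) (at z)) \<and>
        continuous_on UNIV D2 \<and>
        (\<forall>x u v. blinfun_apply (blinfun_apply (D2 (x, u)) (0, v)) (0, v) \<ge> 0)"
    using assms unfolding assm_L_def by (elim conjE exE) blast
  then have D1: "\<forall>z. ((\<lambda>(x, u). L x u) has_derivative blinfun_apply (D1 z)) (at z)" by blast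
  have "continuous_on UNIV (\<lambda>(x, u). L x u)"
    using D1 by (intro has_derivative_continuous_on) auto
  then show ?thesis by (simp add: case_prod_beta')
qed

lemma L_bdd:
  fixes L :: "real^'a::finite \<Rightarrow> real^'b::finite \<Rightarrow> real"
  assumes "assm_L L"
  shows "bdd_above (range (\<lambda>v. q \<bullet> v - L y v))"
proof -
  obtain K1 \<sigma> K2 where K: "K1 > 0" "\<sigma> > 1" "\<forall>x u. L x u \<ge> K1 * norm u powr \<sigma> - K2"
    using assm_L_coercive[OF assms] by blast
  obtain R where R: "R \<ge> 1" "\<And>r. r \<ge> R \<Longrightarrow> norm q * r \<le> K1 * r powr \<sigma>"
    using coercive_aux[OF K(1,2) norm_ge_zero[of q]] by blast
  show ?thesis
  proof (rule bdd_aboveI2)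
    fix v
    have "q \<bullet> v - L y v \<le> norm q * norm v - (K1 * norm v powr \<sigma> - K2)"
    proof -
      have "L y v \<ge> K1 * norm v powr \<sigma> - K2" using K(3) by blast
      then show ?thesis using norm_cauchy_schwarz[of q v] by linarith
    qed
    also have "\<dots> \<le> norm q * R + K2"
    proof (cases "norm v \<ge> R")
      case True
      have "norm q * R \<ge> 0" using R(1) by simp
      then show ?thesis using R(2)[OF True] by linarith
    next
      case False
      have "norm q * norm v \<le> norm q * R" using False by (intro mult_left_mono) auto
      moreover have "K1 * norm v powr \<sigma> \<ge> 0" using K by simp
      ultimately show ?thesis by linarith
    qed
    finally show "q \<bullet> v - L y v \<le> norm q * R + K2" .
  qed
qed

lemma Lstar_ge:
  assumes "assm_L L"
  shows "q \<bullet> v - L y v \<le> Lstar L y q"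
  unfolding Lstar_def by (rule cSUP_upper[OF UNIV_I L_bdd[OF assms]])

lemma Lstar_le:
  assumes "\<And>v. q \<bullet> v - L y v \<le> B"
  shows "Lstar L y q \<le> B"
  unfolding Lstar_def using assms by (intro cSUP_least) auto

lemma gap:
  fixes L :: "real^'d::finite \<Rightarrow> real^'m::finite \<Rightarrow> real"
  assumes L: "assm_L L" and neg: "c + Lstar L x q < 0"
  obtains \<rho> \<eta> \<delta> where "\<rho> > 0" "\<eta> > 0" "\<delta> > 0"
    "\<And>y q' v. norm (y - x) < \<rho> \<Longrightarrow> norm (q' - q) < \<rho> \<Longrightarrow> q' \<bullet> v + \<eta> * norm v + c + \<delta> \<le> L y v"
proof -
  define \<delta> where "\<delta> = - (c + Lstar L x q) / 2"
  have \<delta>: "\<delta> > 0" using neg by (simp add: \<delta>_def)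
  have Lx: "L x v \<ge> q \<bullet> v + c + 2 * \<delta>" for v
  proof -
    have "2 * \<delta> = - (c + Lstar L x q)" by (simp add: \<delta>_def)
    then show ?thesis using Lstar_ge[OF L, of q v x] by linarith
  qed
  obtain K1 \<sigma> K2 where K: "K1 > 0" "\<sigma> > 1" "\<forall>x u. L x u \<ge> K1 * norm u powr \<sigma> - K2"
    using assm_L_coercive[OF L] by blast
  define cc where "cc = norm q + 2 + \<bar>c\<bar> + \<delta> + \<bar>K2\<bar>"
  obtain R where R: "R \<ge> 1" "\<And>r. r \<ge> R \<Longrightarrow> cc * r \<le> K1 * r powr \<sigma>"
    using coercive_aux[OF K(1,2), of cc] \<delta> by (auto simp: cc_def)
  define Lf where "Lf = (\<lambda>z::(real^'d) \<times> (real^'m). L (fst z) (snd z))"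
  have "uniformly_continuous_on (cball x 1 \<times> cball 0 R) Lf"
    using assm_L_cont[OF L] unfolding Lf_def
    by (intro compact_uniformly_continuous) (auto intro: continuous_on_subset compact_Times)
  then obtain \<rho>1 where \<rho>1: "\<rho>1 > 0" and uc: "\<And>z z'. z \<in> cball x 1 \<times> cball 0 R \<Longrightarrow> z' \<in> cball x 1 \<times> cball 0 R \<Longrightarrow>
      dist z' z < \<rho>1 \<Longrightarrow> dist (Lf z') (Lf z) < \<delta>/3"
    unfolding uniformly_continuous_on_def using \<delta> by (metis divide_pos_pos zero_less_numeral)
  define \<rho> where "\<rho> = min 1 (min \<rho>1 (\<delta> / (3 * (R + 1))))"
  define \<eta> where "\<eta> = min 1 (\<delta> / (3 * (R + 1)))"
  have \<rho>: "\<rho> > 0" using \<rho>1 \<delta> R by (simp add: \<rho>_def)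
  have \<eta>: "\<eta> > 0" using \<delta> R by (simp add: \<eta>_def)
  show ?thesis
  proof (rule that[OF \<rho> \<eta> \<delta>])
    fix y q' v
    assume y: "norm (y - x) < \<rho>" and q': "norm (q' - q) < \<rho>"
    have qq: "q' \<bullet> v \<le> q \<bullet> v + norm (q' - q) * norm v"
      using norm_cauchy_schwarz[of "q' - q" v] by (simp add: inner_diff_left)
    show "q' \<bullet> v + \<eta> * norm v + c + \<delta> \<le> L y v"
    proof (cases "norm v \<ge> R")
      case True
      have "norm (q' - q) \<le> 1" "\<eta> \<le> 1" using q' by (auto simp: \<rho>_def \<eta>_def)
      then have "norm (q' - q) * norm v \<le> 1 * norm v" "\<eta> * norm v \<le> 1 * norm v"
        by (intro mult_right_mono; simp)+
      then have "q' \<bullet> v + \<eta> * norm v + c + \<delta> \<le> norm q * norm v + 2 * norm v + \<bar>c\<bar> + \<delta>"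
        using qq norm_cauchy_schwarz[of q v] by linarith
      also have "\<dots> = (norm q + 2) * norm v + \<bar>c\<bar> + \<delta>" by (simp add: algebra_simps)
      also have "\<dots> \<le> cc * norm v - \<bar>K2\<bar>"
      proof -
        have "(\<bar>c\<bar> + \<delta> + \<bar>K2\<bar>) * 1 \<le> (\<bar>c\<bar> + \<delta> + \<bar>K2\<bar>) * norm v"
          using True R(1) \<delta> by (intro mult_left_mono) auto
        then show ?thesis by (simp add: cc_def algebra_simps)
      qed
      also have "\<dots> \<le> K1 * norm v powr \<sigma> - K2" using R(2)[OF True] by linarith
      also have "\<dots> \<le> L y v" using K(3) by blast
      finally show ?thesis .
    next
      case False
      have yin: "(y, v) \<in> cball x 1 \<times> cball 0 R" and xin: "(x, v) \<in> cball x 1 \<times> cball 0 R"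
        using y False by (auto simp: \<rho>_def dist_norm norm_minus_commute)
      have "dist (y, v) (x, v) < \<rho>1" using y by (simp add: dist_Pair_Pair dist_norm \<rho>_def)
      then have "dist (Lf (y, v)) (Lf (x, v)) < \<delta>/3" using uc[OF xin yin] by blast
      then have "\<bar>L y v - L x v\<bar> < \<delta>/3" by (simp add: Lf_def dist_real_def)
      then have Ly: "L y v > L x v - \<delta>/3" by linarith
      have "norm (q' - q) * norm v \<le> \<delta>/3"
      proof -
        have "norm (q' - q) * norm v \<le> (\<delta> / (3 * (R + 1))) * (R + 1)"
          using q' False \<delta> R(1) by (intro mult_mono) (auto simp: \<rho>_def)
        also have "\<dots> = \<delta>/3" using R by (simp add: field_simps)
        finally show ?thesis .
      qed
      moreover have "\<eta> * norm v \<le> \<delta>/3"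
      proof -
        have "\<eta> * norm v \<le> (\<delta> / (3 * (R + 1))) * (R + 1)"
          using False \<eta> \<delta> R(1) by (intro mult_mono) (auto simp: \<eta>_def)
        also have "\<dots> = \<delta>/3" using R by (simp add: field_simps)
        finally show ?thesis .
      qed
      ultimately show ?thesis using qq Ly Lx[of v] by linarith
    qed
  qed
qed



lemma Fmat_cont:
  assumes "assm_F f"
  shows "continuous_on UNIV (Fmat f)"
proof -
  obtain DF :: "_ \<Rightarrow> _ \<Rightarrow>\<^sub>L _" where "\<forall>x. (Fmat f has_derivative blinfun_apply (DF x)) (at x)"
    using assms unfolding assm_F_def by (elim conjE exE) blast
  then show ?thesis by (intro has_derivative_continuous_on) auto
qed

lemma f_eq: "f j y = (\<chi> i. Fmat f y $ i $ j)"
  by (simp add: Fmat_def vec_eq_iff)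

lemma f_cont:
  assumes "assm_F f"
  shows "continuous_on UNIV (f j)"
proof -
  have "continuous_on UNIV (\<lambda>y. \<chi> i. Fmat f y $ i $ j)"
    using Fmat_cont[OF assms] by (intro continuous_on_vec_lambda continuous_on_component) auto
  then show ?thesis by (simp add: f_eq[symmetric])
qed

lemma Fmul: "Fmat f y *v v = (\<Sum>j\<in>UNIV. v $ j *\<^sub>R f j y)"
  by (simp add: matrix_mult_sum column_def Fmat_def scalar_mult_eq_scaleR vec_eq_iff)

lemma Ftrans: "(transpose (Fmat f y) *v p) \<bullet> v = p \<bullet> (Fmat f y *v v)"
  by (simp add: transpose_matrix_vector dot_lmul_matrix)

lemma Ftrans_vec: "transpose (Fmat f y) *v p = (\<chi> j. f j y \<bullet> p)"
  by (simp add: vec_eq_iff transpose_def matrix_vector_mult_def Fmat_def inner_vec_def mult.commute)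

lemma Fbound: "norm (Fmat f y *v v) \<le> (\<Sum>j\<in>UNIV. norm (f j y)) * norm v"
proof -
  have "norm (Fmat f y *v v) \<le> (\<Sum>j\<in>UNIV. norm (v $ j *\<^sub>R f j y))"
    unfolding Fmul by (rule norm_sum)
  also have "\<dots> \<le> (\<Sum>j\<in>UNIV. norm (f j y) * norm v)"
    by (intro sum_mono) (simp add: mult.commute mult_right_mono component_le_norm_cart)
  also have "\<dots> = (\<Sum>j\<in>UNIV. norm (f j y)) * norm v" by (simp add: sum_distrib_right)
  finally show ?thesis .
qed

lemma Fbound_local:
  assumes "assm_F f"
  obtains C where "C > 0" "\<And>y v. y \<in> cball x 1 \<Longrightarrow> norm (Fmat f y *v v) \<le> C * norm v"
proof -
  have "continuous_on (cball x 1) (\<lambda>y. \<Sum>j\<in>UNIV. norm (f j y))"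
    using f_cont[OF assms] by (intro continuous_intros) (auto intro: continuous_on_subset)
  then have "bounded ((\<lambda>y. \<Sum>j\<in>UNIV. norm (f j y)) ` cball x 1)"
    by (intro compact_imp_bounded compact_continuous_image) auto
  then obtain B where B: "\<And>y. y \<in> cball x 1 \<Longrightarrow> norm (\<Sum>j\<in>UNIV. norm (f j y)) \<le> B"
    unfolding bounded_iff by blast
  show ?thesis
  proof (rule that[of "B + 1"])
    show "B + 1 > 0" using B[of x] by (smt (verit) centre_in_cball norm_ge_zero)
    fix y v assume y: "y \<in> cball x 1"
    have "norm (Fmat f y *v v) \<le> (\<Sum>j\<in>UNIV. norm (f j y)) * norm v" by (rule Fbound)
    also have "\<dots> \<le> (B + 1) * norm v"
      using B[OF y] by (intro mult_right_mono) auto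
    finally show "norm (Fmat f y *v v) \<le> (B + 1) * norm v" .
  qed
qed

lemma q_cont:
  assumes "assm_F f"
  shows "continuous_on UNIV (\<lambda>y. transpose (Fmat f y) *v p)"
  unfolding Ftrans_vec using f_cont[OF assms]
  by (intro continuous_on_vec_lambda continuous_intros) auto



lemma quad_test:
  fixes chi :: "real^'d::finite \<Rightarrow> real" and c :: real
  assumes sub: "visc_subsol c H chi" and p: "p \<in> superdiff chi x" and e: "\<epsilon> > 0"
  shows "\<exists>y p'. norm (y - x) \<le> \<epsilon> \<and> norm (p' - p) \<le> 2 * \<epsilon> \<and> c + H y p' \<le> 0"
proof -
  have chic: "continuous_on UNIV chi" using sub by (simp add: visc_subsol_def)
  have subH: "\<And>\<phi> y0 p0. C1_fun \<phi> \<Longrightarrow> (\<phi> has_derivative (\<lambda>h. p0 \<bullet> h)) (at y0) \<Longrightarrow>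
        (\<exists>r>0. \<forall>y. dist y y0 < r \<longrightarrow> chi y - \<phi> y \<le> chi y0 - \<phi> y0) \<Longrightarrow> c + H y0 p0 \<le> 0"
    using sub unfolding visc_subsol_def by blast
  obtain r where r: "r > 0" and rr: "\<And>y. norm (y - x) < r \<Longrightarrow> chi y - chi x - p \<bullet> (y - x) \<le> \<epsilon> * norm (y - x)"
    using p e unfolding superdiff_def by blast
  define r' where "r' = min r \<epsilon>"
  have r': "r' > 0" "r' \<le> r" "r' \<le> \<epsilon>" using r e by (auto simp: r'_def)
  define k where "k = 4 * \<epsilon> / r'"
  have k: "k > 0" using e r' by (simp add: k_def)
  define \<phi> where "\<phi> y = p \<bullet> y + k * (norm (y - x))\<^sup>2" for y
  define \<psi> where "\<psi> y = chi y - \<phi> y" for y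
  have \<psi>c: "continuous_on (cball x (r'/2)) \<psi>"
    unfolding \<psi>_def \<phi>_def using chic by (intro continuous_intros) (auto intro: continuous_on_subset)
  obtain y0 where y0: "y0 \<in> cball x (r'/2)" and y0max: "\<And>y. y \<in> cball x (r'/2) \<Longrightarrow> \<psi> y \<le> \<psi> y0"
    using continuous_attains_sup[OF compact_cball _ \<psi>c] r' by auto
  have "\<psi> x \<le> \<psi> y0" using y0max r' by auto
  then have ge: "chi y0 - chi x - p \<bullet> (y0 - x) - k * (norm (y0 - x))\<^sup>2 \<ge> 0"
    by (simp add: \<psi>_def \<phi>_def inner_diff_right)
  have "norm (y0 - x) < r" using y0 r' by (simp add: dist_norm norm_minus_commute)
  then have "chi y0 - chi x - p \<bullet> (y0 - x) \<le> \<epsilon> * norm (y0 - x)" by (rule rr)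
  with ge have kk: "k * (norm (y0 - x))\<^sup>2 \<le> \<epsilon> * norm (y0 - x)" by linarith
  have ny0: "k * norm (y0 - x) \<le> \<epsilon>"
  proof (cases "norm (y0 - x) = 0")
    case True then show ?thesis using e by simp
  next
    case False
    then have "norm (y0 - x) > 0" by simp
    moreover have "(k * norm (y0 - x)) * norm (y0 - x) \<le> \<epsilon> * norm (y0 - x)"
      using kk by (simp add: power2_eq_square mult.assoc)
    ultimately show ?thesis by simp
  qed
  have ny0': "norm (y0 - x) \<le> r'/4"
  proof -
    have "norm (y0 - x) * (4 * \<epsilon> / r') \<le> \<epsilon>" using ny0 by (simp add: k_def mult.commute)
    then have "norm (y0 - x) * (4 * \<epsilon>) \<le> \<epsilon> * r'" using r' by (simp add: field_simps)
    then show ?thesis using e by (simp add: field_simps)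
  qed
  define p0 where "p0 = p + (2 * k) *\<^sub>R (y0 - x)"
  have dphi: "(\<phi> has_derivative (\<lambda>h. (p + (2 * k) *\<^sub>R (y - x)) \<bullet> h)) (at y)" for y
  proof -
    have "(\<phi> has_derivative (\<lambda>h. p \<bullet> h + k * (2 * ((y - x) \<bullet> h)))) (at y)"
      unfolding \<phi>_def power2_norm_eq_inner
      by (auto intro!: derivative_eq_intros simp: inner_commute)
    then show ?thesis by (simp add: inner_add_left algebra_simps)
  qed
  have C1: "C1_fun \<phi>"
    unfolding C1_fun_def
  proof (intro exI conjI allI)
    fix y
    show "(\<phi> has_derivative blinfun_apply (blinfun_inner_left (p + (2 * k) *\<^sub>R (y - x)))) (at y)"
      using dphi[of y] by (simp add: inner_commute)
  next
    show "continuous_on UNIV (\<lambda>y. blinfun_inner_left (p + (2 * k) *\<^sub>R (y - x)))"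
      by (intro bounded_linear.continuous_on[OF bounded_linear_blinfun_inner_left] continuous_intros)
  qed
  have locmax: "\<exists>r>0. \<forall>y. dist y y0 < r \<longrightarrow> chi y - \<phi> y \<le> chi y0 - \<phi> y0"
  proof (intro exI[of _ "r'/4"] conjI allI impI)
    show "r'/4 > 0" using r' by simp
    fix y assume "dist y y0 < r'/4"
    then have "norm (y - x) < r'/2"
      using ny0' norm_triangle_ineq[of "y - y0" "y0 - x"] by (simp add: dist_norm)
    then have "y \<in> cball x (r'/2)" by (simp add: dist_norm norm_minus_commute)
    then show "chi y - \<phi> y \<le> chi y0 - \<phi> y0" using y0max unfolding \<psi>_def by blast
  qed
  have "c + H y0 p0 \<le> 0" using subH[OF C1 dphi[of y0, folded p0_def] locmax] .
  moreover have "norm (y0 - x) \<le> \<epsilon>" using ny0' r' by simp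
  moreover have "norm (p0 - p) \<le> 2 * \<epsilon>"
    using ny0 k by (simp add: p0_def)
  ultimately show ?thesis by blast
qed

lemma part1:
  fixes f :: "'m::finite \<Rightarrow> real^'d::finite \<Rightarrow> real^'d" and L :: "real^'d \<Rightarrow> real^'m \<Rightarrow> real"
  assumes F: "assm_F f" and L: "assm_L L" and sub: "visc_subsol c (Ham f L) chi"
    and p: "p \<in> superdiff chi x"
  shows "c + Lstar L x (transpose (Fmat f x) *v p) \<le> 0"
proof -
  have "(transpose (Fmat f x) *v p) \<bullet> v - L x v \<le> - c" for v
  proof (rule ccontr)
    assume neg: "\<not> (transpose (Fmat f x) *v p) \<bullet> v - L x v \<le> - c"
    define G where "G z = c + snd z \<bullet> (\<Sum>j\<in>UNIV. v $ j *\<^sub>R f j (fst z)) - L (fst z) v" for z :: "(real^'d) \<times> (real^'d)"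
    have Geq: "G (y, p') = c + (transpose (Fmat f y) *v p') \<bullet> v - L y v" for y p'
      unfolding G_def Ftrans Fmul by simp
    have Gx: "G (x, p) > 0" using neg unfolding Geq by linarith
    have "continuous_on UNIV (\<lambda>z::(real^'d) \<times> (real^'d). L (fst z) v)"
    proof -
      have "continuous_on UNIV ((\<lambda>z. L (fst z) (snd z)) \<circ> (\<lambda>z::(real^'d) \<times> (real^'d). (fst z, v)))"
        by (intro continuous_on_compose continuous_intros) (auto intro: continuous_on_subset[OF assm_L_cont[OF L]])
      then show ?thesis by (simp add: o_def)
    qed
    moreover have "continuous_on UNIV (\<lambda>z::(real^'d) \<times> (real^'d). f j (fst z))" for j
      by (intro continuous_on_compose2[OF f_cont[OF F]] continuous_intros) auto
    ultimately have "continuous_on UNIV G"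
      unfolding G_def by (intro continuous_intros) auto
    then have "isCont G (x, p)" by (simp add: continuous_on_eq_continuous_at)
    then obtain \<zeta> where \<zeta>: "\<zeta> > 0" and Gz: "\<And>z. dist z (x, p) < \<zeta> \<Longrightarrow> dist (G z) (G (x, p)) < G (x, p)"
      unfolding continuous_at_eps_delta using Gx by blast
    obtain y p' where yp: "norm (y - x) \<le> \<zeta>/4" "norm (p' - p) \<le> 2 * (\<zeta>/4)" "c + Ham f L y p' \<le> 0"
      using quad_test[OF sub p, of "\<zeta>/4"] \<zeta> by auto
    have "dist (y, p') (x, p) \<le> dist y x + dist p' p"
      unfolding dist_Pair_Pair by (rule sqrt_sum_squares_le_sum) auto
    also have "\<dots> < \<zeta>" using yp \<zeta> by (simp add: dist_norm)
    finally have "dist (G (y, p')) (G (x, p)) < G (x, p)" by (rule Gz)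
    then have "G (y, p') > 0" by (simp add: dist_real_def abs_less_iff)
    moreover have "(transpose (Fmat f y) *v p') \<bullet> v - L y v \<le> Ham f L y p'"
      unfolding Ham_def by (rule Lstar_ge[OF L])
    ultimately show False using yp(3) by (simp add: Geq)
  qed
  then show ?thesis using Lstar_le[of "transpose (Fmat f x) *v p" L x "- c"] by simp
qed



lemma part2:
  fixes f :: "'m::finite \<Rightarrow> real^'d::finite \<Rightarrow> real^'d" and L :: "real^'d \<Rightarrow> real^'m \<Rightarrow> real"
  assumes F: "assm_F f" and L: "assm_L L" and pair: "tc_pair f UNIV \<gamma> u"
    and cal: "calibrated f L chi UNIV \<gamma> u"
    and p: "p \<in> superdiff chi (\<gamma> \<tau>)"
  shows "crit_const f L + Lstar L (\<gamma> \<tau>) (transpose (Fmat f (\<gamma> \<tau>)) *v p) \<ge> 0"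
proof (rule ccontr)
  define c where "c = crit_const f L"
  define x where "x = \<gamma> \<tau>"
  define q where "q = transpose (Fmat f x) *v p"
  assume "\<not> ?thesis"
  then have neg: "c + Lstar L x q < 0" by (simp add: c_def x_def q_def)
  obtain \<rho> \<eta> \<delta> where \<rho>: "\<rho> > 0" and \<eta>: "\<eta> > 0" and \<delta>: "\<delta> > 0"
    and gp: "\<And>y q' v. norm (y - x) < \<rho> \<Longrightarrow> norm (q' - q) < \<rho> \<Longrightarrow> q' \<bullet> v + \<eta> * norm v + c + \<delta> \<le> L y v"
    using gap[OF L neg] by blast
  obtain C where C: "C > 0" and Cb: "\<And>y v. y \<in> cball x 1 \<Longrightarrow> norm (Fmat f y *v v) \<le> C * norm v"
    using Fbound_local[OF F] by blast
  define \<epsilon> where "\<epsilon> = \<eta> / C"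
  have \<epsilon>: "\<epsilon> > 0" using \<eta> C by (simp add: \<epsilon>_def)
  obtain \<delta>' where \<delta>': "\<delta>' > 0" and sd: "\<And>y. norm (y - x) < \<delta>' \<Longrightarrow> chi y - chi x - p \<bullet> (y - x) \<le> \<epsilon> * norm (y - x)"
    using p \<epsilon> unfolding superdiff_def x_def by blast
  have "isCont (\<lambda>y. transpose (Fmat f y) *v p) x"
    using q_cont[OF F] by (simp add: continuous_on_eq_continuous_at)
  then obtain \<rho>2 where \<rho>2: "\<rho>2 > 0" and qc: "\<And>y. dist y x < \<rho>2 \<Longrightarrow> dist (transpose (Fmat f y) *v p) q < \<rho>"
    unfolding continuous_at_eps_delta q_def using \<rho> by blast
  define \<rho>3 where "\<rho>3 = min (min \<rho> \<rho>2) (min \<delta>' 1)"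
  have \<rho>3: "\<rho>3 > 0" using \<rho> \<rho>2 \<delta>' by (simp add: \<rho>3_def)
  have pairD: "loc_abs_cont \<gamma> UNIV" "L2_loc u UNIV"
    "AE t in lebesgue. t \<in> UNIV \<longrightarrow> (\<gamma> has_vector_derivative (Fmat f (\<gamma> t) *v u t)) (at t)"
    using pair by (auto simp: tc_pair_def)
  have "isCont \<gamma> \<tau>" using ac_continuous[OF pairD(1)] by (simp add: continuous_on_eq_continuous_at)
  then obtain h where h: "h > 0" and hc: "\<And>s. dist s \<tau> < h \<Longrightarrow> dist (\<gamma> s) x < \<rho>3"
    unfolding continuous_at_eps_delta x_def using \<rho>3 by blast
  define b where "b = \<tau> + h/2"
  have tb: "\<tau> < b" using h by (simp add: b_def)
  have near: "norm (\<gamma> s - x) < \<rho>3" if "s \<in> {\<tau>..b}" for s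
    using hc[of s] that h by (simp add: b_def dist_norm dist_real_def)
  have act: "action L \<gamma> u \<tau> b = ereal (chi (\<gamma> b) - chi (\<gamma> \<tau>) + crit_const f L * (b - \<tau>))"
    using cal tb unfolding calibrated_def by blast
  then have intL: "integrable (lebesgue_on {\<tau>..b}) (\<lambda>s. L (\<gamma> s) (u s))"
    and valL: "integral\<^sup>L (lebesgue_on {\<tau>..b}) (\<lambda>s. L (\<gamma> s) (u s)) = chi (\<gamma> b) - chi x + c * (b - \<tau>)"
    by (auto simp: action_def x_def c_def split: if_splits)
  have hiL: "((\<lambda>s. L (\<gamma> s) (u s)) has_integral (chi (\<gamma> b) - chi x + c * (b - \<tau>))) {\<tau>..b}"
    using has_integral_integral_lebesgue_on[OF intL] valL by simp
  obtain N where N: "{t \<in> space lebesgue. \<not> (t \<in> UNIV \<longrightarrow> (\<gamma> has_vector_derivative (Fmat f (\<gamma> t) *v u t)) (at t))} \<subseteq> N"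
    "emeasure lebesgue N = 0" "N \<in> sets lebesgue"
    using AE_E[OF pairD(3)] by blast
  have negN: "negligible N" using N by (simp add: negligible_iff_null_sets null_sets_def)
  have hig: "((\<lambda>s. Fmat f (\<gamma> s) *v u s) has_integral (\<gamma> b - x)) {\<tau>..b}"
    unfolding x_def
  proof (rule ftc_ac[OF _ _ negN])
    show "\<tau> \<le> b" using tb by simp
    show "abs_cont_on \<gamma> \<tau> b" using pairD(1) by (simp add: loc_abs_cont_def)
    show "(\<gamma> has_vector_derivative Fmat f (\<gamma> t) *v u t) (at t)" if "t \<in> {\<tau>..b} - N" for t
      using N(1) that by auto
  qed
  have umeas: "u \<in> borel_measurable (lebesgue_on UNIV)"
    using pairD(2) by (simp add: L2_loc_def)
  have u2: "integrable (lebesgue_on {\<tau>..b}) (\<lambda>t. norm (u t) ^ 2)"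
    using pairD(2) by (simp add: L2_loc_def)
  have u2i: "(\<lambda>t. norm (u t) ^ 2) integrable_on {\<tau>..b}"
    using has_integral_integral_lebesgue_on[OF u2] has_integral_integrable by auto
  have nui: "(\<lambda>t. norm (u t)) integrable_on {\<tau>..b}"
  proof (rule measurable_bounded_by_integrable_imp_integrable_real)
    show "(\<lambda>t. norm (u t)) \<in> borel_measurable (lebesgue_on {\<tau>..b})"
    proof -
      have "u \<in> borel_measurable (lebesgue_on {\<tau>..b})"
        by (rule measurable_restrict_mono[OF umeas]) simp
      then show ?thesis by measurable
    qed
    show "(\<lambda>t. 1 + norm (u t) ^ 2) integrable_on {\<tau>..b}"
      using u2i by (intro integrable_add) auto
    show "\<bar>norm (u t)\<bar> \<le> 1 + norm (u t) ^ 2" if "t \<in> {\<tau>..b}" for t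
    proof -
      have "norm (u t) \<le> 1 + norm (u t) ^ 2"
      proof (cases "norm (u t) \<le> 1")
        case True
        moreover have "norm (u t) ^ 2 \<ge> 0" by simp
        ultimately show ?thesis by linarith
      next
        case False
        then have "norm (u t) * 1 \<le> norm (u t) * norm (u t)" by (intro mult_left_mono) auto
        then show ?thesis by (simp add: power2_eq_square)
      qed
      then show ?thesis by simp
    qed
  qed auto
  define I where "I = integral {\<tau>..b} (\<lambda>t. norm (u t))"
  have hiu: "((\<lambda>t. norm (u t)) has_integral I) {\<tau>..b}" using nui unfolding I_def by (rule integrable_integral)
  have disp: "norm (\<gamma> b - x) \<le> C * I"
  proof -
    have e1: "norm (integral {\<tau>..b} (\<lambda>s. Fmat f (\<gamma> s) *v u s)) \<le> integral {\<tau>..b} (\<lambda>s. C * norm (u s))"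
    proof (rule integral_norm_bound_integral)
      show "(\<lambda>s. Fmat f (\<gamma> s) *v u s) integrable_on {\<tau>..b}" using hig by blast
      show "(\<lambda>s. C * norm (u s)) integrable_on {\<tau>..b}" using has_integral_mult_right[OF hiu, of C] by blast
      show "norm (Fmat f (\<gamma> s) *v u s) \<le> C * norm (u s)" if "s \<in> {\<tau>..b}" for s
        using near[OF that] Cb[of "\<gamma> s"] by (simp add: \<rho>3_def dist_norm norm_minus_commute)
    qed
    have e2: "integral {\<tau>..b} (\<lambda>s. Fmat f (\<gamma> s) *v u s) = \<gamma> b - x"
      using hig by (rule integral_unique)
    have e3: "integral {\<tau>..b} (\<lambda>s. C * norm (u s)) = C * I"
      using has_integral_mult_right[OF hiu, of C] by (rule integral_unique)
    show ?thesis using e1 unfolding e2 e3 .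
  qed
  have hlin: "((\<lambda>s. p \<bullet> (Fmat f (\<gamma> s) *v u s)) has_integral p \<bullet> (\<gamma> b - x)) {\<tau>..b}"
    using has_integral_linear[OF hig bounded_linear_inner_right[of p]] by (simp add: o_def)
  have hconst: "((\<lambda>s. c + \<delta>) has_integral (c + \<delta>) * (b - \<tau>)) {\<tau>..b}"
    using has_integral_const_real[of "c + \<delta>" \<tau> b] tb by (simp add: mult.commute)
  have hsum: "((\<lambda>s. p \<bullet> (Fmat f (\<gamma> s) *v u s) + \<eta> * norm (u s) + (c + \<delta>)) has_integral
        (p \<bullet> (\<gamma> b - x) + \<eta> * I + (c + \<delta>) * (b - \<tau>))) {\<tau>..b}"
    by (intro has_integral_add hlin hconst has_integral_mult_right hiu)
  have ineq: "p \<bullet> (\<gamma> b - x) + \<eta> * I + (c + \<delta>) * (b - \<tau>) \<le> chi (\<gamma> b) - chi x + c * (b - \<tau>)"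
  proof (rule has_integral_le[OF hsum hiL])
    fix s assume s: "s \<in> {\<tau>..b}"
    have n1: "norm (\<gamma> s - x) < \<rho>" using near[OF s] by (simp add: \<rho>3_def)
    have "dist (transpose (Fmat f (\<gamma> s)) *v p) q < \<rho>"
      using qc[of "\<gamma> s"] near[OF s] by (simp add: \<rho>3_def dist_norm)
    then have n2: "norm (transpose (Fmat f (\<gamma> s)) *v p - q) < \<rho>" by (simp add: dist_norm)
    have "(transpose (Fmat f (\<gamma> s)) *v p) \<bullet> u s + \<eta> * norm (u s) + c + \<delta> \<le> L (\<gamma> s) (u s)"
      by (rule gp[OF n1 n2])
    then show "p \<bullet> (Fmat f (\<gamma> s) *v u s) + \<eta> * norm (u s) + (c + \<delta>) \<le> L (\<gamma> s) (u s)"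
      unfolding Ftrans by linarith
  qed
  have "norm (\<gamma> b - x) < \<delta>'" using near[of b] tb by (simp add: \<rho>3_def)
  then have sdb: "chi (\<gamma> b) - chi x - p \<bullet> (\<gamma> b - x) \<le> \<epsilon> * norm (\<gamma> b - x)" by (rule sd)
  have "\<epsilon> * norm (\<gamma> b - x) \<le> \<epsilon> * (C * I)" using disp \<epsilon> by (intro mult_left_mono) auto
  also have "\<dots> = \<eta> * I" using C by (simp add: \<epsilon>_def)
  finally have "\<epsilon> * norm (\<gamma> b - x) \<le> \<eta> * I" .
  moreover have "\<delta> * (b - \<tau>) > 0" using \<delta> tb by simp
  ultimately show False using ineq sdb by (simp add: algebra_simps)
qed


theorem proposition3p12:
  fixes f :: "'m::finite \<Rightarrow> real^'d::finite \<Rightarrow> real^'d"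
    and L :: "real^'d \<Rightarrow> real^'m \<Rightarrow> real"
    and chi :: "real^'d \<Rightarrow> real"
    and \<gamma> :: "real \<Rightarrow> real^'d"
    and u :: "real \<Rightarrow> real^'m"
  assumes m_le_d: "CARD('m) \<le> CARD('d)"
    and smooth: "\<forall>j. smooth_vf (f j)"
    and periodic: "\<forall>j. torus_periodic (f j)"
    and hoer: "hoermander f"
    and F: "assm_F f"
    and L: "assm_L L"
    and S: "assm_S f L"
    and chi_per: "torus_periodic chi"
    and sub: "visc_subsol (crit_const f L) (Ham f L) chi"
    and pair: "tc_pair f UNIV \<gamma> u"
    and cal: "calibrated f L chi UNIV \<gamma> u"
  shows "\<forall>\<tau>>0. \<forall>q \<in> superdiff_F f chi (\<gamma> \<tau>). crit_const f L + Lstar L (\<gamma> \<tau>) q = 0"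
proof (intro allI impI ballI)
  fix \<tau> :: real and q
  assume "\<tau> > 0" and "q \<in> superdiff_F f chi (\<gamma> \<tau>)"
  then obtain p where p: "p \<in> superdiff chi (\<gamma> \<tau>)" and q: "q = transpose (Fmat f (\<gamma> \<tau>)) *v p"
    unfolding superdiff_F_def by blast
  have "crit_const f L + Lstar L (\<gamma> \<tau>) q \<le> 0" using part1[OF F L sub p] q by simp
  moreover have "crit_const f L + Lstar L (\<gamma> \<tau>) q \<ge> 0" using part2[OF F L pair cal p] q by simp
  ultimately show "crit_const f L + Lstar L (\<gamma> \<tau>) q = 0" by linarith
qed

end
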